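(* Let $G$ be a finite group such that (a) the Gruenberg--Kegel graph of $G$ is connected, and (b) for every Sylow subgroup $P$ of $G$, the centre $Z(P)$ is non-cyclic. Then the induced subgraph of $(\mathrm{Com}-\mathrm{Pow})(G)$ on $G\setminus\{1\}$ either has an isolated vertex or is connected.
   Context: $(\mathrm{Com}-\mathrm{Pow})(G)$ is the graph on vertex set $G$ in which distinct $x,y$ are adjacent iff $xy=yx$ and neither of $x,y$ is a power of the other. The Gruenberg--Kegel graph of $G$ has vertex set the primes dividing $|G|$, distinct primes $p,q$ being adjacent iff $G$ has an element of order $pq$. *)

theory Defs
  imports "HOL-Algebra.Algebra"
begin

definition graph_connected :: "'v set \<Rightarrow> ('v \<Rightarrow> 'v \<Rightarrow> bool) \<Rightarrow> bool" where
  "graph_connected V E \<longleftrightarrow>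
     (\<forall>u\<in>V. \<forall>v\<in>V. (u, v) \<in> {(x, y). x \<in> V \<and> y \<in> V \<and> E x y}\<^sup>*)"

definition has_isolated_vertex :: "'v set \<Rightarrow> ('v \<Rightarrow> 'v \<Rightarrow> bool) \<Rightarrow> bool" where
  "has_isolated_vertex V E \<longleftrightarrow> (\<exists>v\<in>V. \<not> (\<exists>w\<in>V. w \<noteq> v \<and> E v w))"

definition GK_vertices :: "('a, 'b) monoid_scheme \<Rightarrow> nat set" where
  "GK_vertices G = {p. Factorial_Ring.prime p \<and> p dvd order G}"

definition GK_adj :: "('a, 'b) monoid_scheme \<Rightarrow> nat \<Rightarrow> nat \<Rightarrow> bool" where
  "GK_adj G p q \<longleftrightarrow> p \<noteq> q \<and> (\<exists>x\<in>carrier G. group.ord G x = p * q)"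

definition is_power_of :: "('a, 'b) monoid_scheme \<Rightarrow> 'a \<Rightarrow> 'a \<Rightarrow> bool" where
  "is_power_of G x y \<longleftrightarrow> (\<exists>k::int. x = y [^]\<^bsub>G\<^esub> k)"

definition ComPow_adj :: "('a, 'b) monoid_scheme \<Rightarrow> 'a \<Rightarrow> 'a \<Rightarrow> bool" where
  "ComPow_adj G x y \<longleftrightarrow> x \<noteq> y \<and> x \<otimes>\<^bsub>G\<^esub> y = y \<otimes>\<^bsub>G\<^esub> x
      \<and> \<not> is_power_of G x y \<and> \<not> is_power_of G y x"

definition sylow_subgroup :: "('a, 'b) monoid_scheme \<Rightarrow> nat \<Rightarrow> 'a set \<Rightarrow> bool" where
  "sylow_subgroup G p P \<longleftrightarrow> Factorial_Ring.prime p \<and> p dvd order G \<and> subgroup P G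
      \<and> card P = p ^ multiplicity p (order G)"

definition group_centre :: "('a, 'b) monoid_scheme \<Rightarrow> 'a set \<Rightarrow> 'a set" where
  "group_centre G P = {z \<in> P. \<forall>x\<in>P. z \<otimes>\<^bsub>G\<^esub> x = x \<otimes>\<^bsub>G\<^esub> z}"

end

theory Submission
  imports Defs
begin

lemma (in group) rcosets_mult_closed:
  assumes "subgroup S G" "C \<in> rcosets S" "a \<in> carrier G"
  shows "C #> a \<in> rcosets S"
proof -
  from assms(2) obtain g where g: "g \<in> carrier G" "C = S #> g"
    unfolding RCOSETS_def by auto
  have "C #> a = S #> (g \<otimes> a)"
    using g assms(1,3) coset_mult_assoc subgroup.subset by blast
  thus ?thesis using g assms rcosetsI subgroup.subset by (metis m_closed)
qed

lemma (in group) rcosets_subset_carrier: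
  assumes "subgroup S G" "C \<in> rcosets S"
  shows "C \<subseteq> carrier G"
  using assms unfolding RCOSETS_def using r_coset_subset_G subgroup.subset by blast

lemma (in group) right_action_rcosets:
  assumes S: "subgroup S G" and H: "subgroup H G"
  shows "group_action (G\<lparr>carrier := H\<rparr>) (rcosets S) (\<lambda>h. \<lambda>C \<in> rcosets S. C #> inv h)"
proof -
  let ?X = "rcosets S"
  let ?phi = "\<lambda>h. \<lambda>C \<in> rcosets S. C #> inv h"
  have HG: "group (G\<lparr>carrier := H\<rparr>)" using subgroup_imp_group[OF H] .
  have inH: "h \<in> carrier G" if "h \<in> H" for h using that H subgroup.subset by blast
  have bij: "?phi h \<in> Bij ?X" if h: "h \<in> H" for h
  proof -
    have hc: "h \<in> carrier G" using inH h .
    have "bij_betw (?phi h) ?X ?X"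
    proof (rule bij_betwI[where g = "\<lambda>C. C #> h"])
      show "?phi h \<in> ?X \<rightarrow> ?X" using rcosets_mult_closed[OF S] hc by auto
      show "(\<lambda>C. C #> h) \<in> ?X \<rightarrow> ?X" using rcosets_mult_closed[OF S] hc by auto
      show "?phi h (C #> h) = C" if "C \<in> ?X" for C  
      proof -
        have "?phi h (C #> h) = (C #> h) #> inv h" using that hc rcosets_mult_closed[OF S] by simp
        thus ?thesis using that hc rcosets_subset_carrier[OF S] coset_mult_assoc
          by (metis coset_mult_one inv_closed r_inv)
      qed
      show "?phi h C #> h = C" if "C \<in> ?X" for C  
      proof -
        have "?phi h C = C #> inv h" using that by simp
        thus ?thesis using that hc rcosets_subset_carrier[OF S] coset_mult_assoc
          by (metis coset_mult_one inv_closed l_inv)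
      qed
    qed
    thus ?thesis unfolding Bij_def by auto
  qed
  have hom: "?phi (h1 \<otimes> h2) = ?phi h1 \<otimes>\<^bsub>BijGroup ?X\<^esub> ?phi h2" if "h1 \<in> H" "h2 \<in> H" for h1 h2
  proof -
    have c: "h1 \<in> carrier G" "h2 \<in> carrier G" using that inH by auto
    show ?thesis
      unfolding BijGroup_def using bij that
      apply (simp add: compose_def)
      apply (rule ext)
      using c rcosets_subset_carrier[OF S] coset_mult_assoc rcosets_mult_closed[OF S]
      by (auto simp: inv_mult_group)
  qed
  have cb: "carrier (BijGroup ?X) = Bij ?X" by (simp add: BijGroup_def)
  show ?thesis
    unfolding group_action_def group_hom_def group_hom_axioms_def hom_def
    using HG group_BijGroup[of ?X] bij hom cb by auto
qed

lemma (in group) pgroup_fixed_coset: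
  assumes fin: "finite (carrier G)" and S: "subgroup S G" and p: "Factorial_Ring.prime p"
    and nd: "\<not> p dvd card (rcosets S)" and H: "subgroup H G" "card H = p^k"
  shows "\<exists>g\<in>carrier G. \<forall>h\<in>H. S #> g #> h = S #> g"
proof (rule ccontr)
  assume nofix: "\<not> ?thesis"
  let ?X = "rcosets S"
  let ?phi = "\<lambda>h. \<lambda>C \<in> rcosets S. C #> inv h"
  let ?H = "G\<lparr>carrier := H\<rparr>"
  have act: "group_action ?H ?X ?phi" using right_action_rcosets[OF S H(1)] .
  have finX: "finite ?X"
    using rcosets_subset_PowG[OF S] fin by (meson finite_Pow_iff finite_subset)
  have inH: "h \<in> carrier G" if "h \<in> H" for h using that H subgroup.subset by blast
  have pd: "p dvd card orb" if orb: "orb \<in> orbits ?H ?X ?phi" for orb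
  proof -
    obtain C where C: "C \<in> ?X" "orb = orbit ?H ?phi C" using orb unfolding orbits_def by auto
    have "card (orbit ?H ?phi C) * card (stabilizer ?H ?phi C) = order ?H"
      using group_action.orbit_stabilizer_theorem[OF act C(1)] .
    also have "order ?H = p^k" using H(2) by (simp add: order_def)
    finally have "card orb dvd p^k" using C(2) by (metis dvd_triv_left)
    then obtain i where i: "card orb = p^i" using divides_primepow_nat[OF p] by auto
    show ?thesis
    proof (cases i)
      case 0
      hence c1: "card orb = 1" using i by simp
      have Corb: "C \<in> orb" using group_action.orbit_refl[OF act C(1)] C(2) by simp
      have orbC: "orb = {C}"
      proof -
        obtain a where "orb = {a}" using c1 card_1_singletonE by blast
        thus ?thesis using Corb by blast
      qed
      have fixC: "C #> inv h = C" if "h \<in> H" for h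
      proof -
        have "?phi h C \<in> orbit ?H ?phi C" unfolding orbit_def
          apply (rule CollectI) apply (rule exI[of _ h]) using that by simp
        hence "?phi h C = C" using orbC C(2) by blast
        thus ?thesis using C(1) by (metis restrict_apply')
      qed
      obtain g where g: "g \<in> carrier G" "C = S #> g" using C(1) unfolding RCOSETS_def by auto
      have "S #> g #> h = S #> g" if "h \<in> H" for h
      proof -
        have "inv h \<in> H" using subgroup.m_inv_closed[OF H(1) that] .
        hence "C #> inv (inv h) = C" by (rule fixC)
        hence "C #> h = C" using inv_inv[OF inH[OF that]] by simp
        thus ?thesis using g(2) by simp
      qed
      hence False using nofix g(1) by blast
      thus ?thesis ..
    next
      case (Suc j)
      thus ?thesis using i by simp
    qed
  qed
  have "(\<Sum>orb\<in>orbits ?H ?X ?phi. \<Sum>x\<in>orb. (1::nat)) = (\<Sum>x\<in>?X. 1)"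
    using group_action.disjoint_sum[OF act finX] .
  hence "card ?X = (\<Sum>orb\<in>orbits ?H ?X ?phi. card orb)" by simp
  hence "p dvd card ?X" using pd by (simp add: dvd_sum)
  thus False using nd by simp
qed

lemma (in group) conj_image_eq:
  assumes "g \<in> carrier G" "S \<subseteq> carrier G"
  shows "inv g <# S #> g = (\<lambda>s. inv g \<otimes> s \<otimes> g) ` S"
  unfolding l_coset_def r_coset_def by auto

lemma (in group) conj_sylow:
  assumes "sylow_subgroup G p S" "g \<in> carrier G"
  shows "sylow_subgroup G p ((\<lambda>s. inv g \<otimes> s \<otimes> g) ` S)"
proof -
  have S: "subgroup S G" using assms(1) unfolding sylow_subgroup_def by blast
  have Sc: "S \<subseteq> carrier G" using S subgroup.subset by blast
  have sub: "subgroup ((\<lambda>s. inv g \<otimes> s \<otimes> g) ` S) G"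
    using subgroup_conjugation_is_surj1[OF assms(2) S] conj_image_eq[OF assms(2) Sc] by simp
  have "inj_on (\<lambda>s. inv g \<otimes> s \<otimes> g) S"
  proof (rule inj_onI)
    fix a b assume ab: "a \<in> S" "b \<in> S" "inv g \<otimes> a \<otimes> g = inv g \<otimes> b \<otimes> g"
    have "a \<in> carrier G" "b \<in> carrier G" using ab Sc by auto
    thus "a = b" using ab(3) assms(2) by (simp add: m_assoc)
  qed
  hence "card ((\<lambda>s. inv g \<otimes> s \<otimes> g) ` S) = card S" by (rule card_image)
  thus ?thesis using assms(1) sub unfolding sylow_subgroup_def by simp
qed

lemma (in group) sylow_exists:
  assumes fin: "finite (carrier G)" and p: "Factorial_Ring.prime p" and d: "p dvd order G"
  shows "\<exists>S. sylow_subgroup G p S"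
proof -
  let ?a = "multiplicity p (order G)"
  have "p ^ ?a dvd order G" by (rule multiplicity_dvd)
  then obtain m where "order G = p ^ ?a * m" by blast
  then obtain S where "subgroup S G" "card S = p ^ ?a"
    using sylow_thm[OF p is_group _ fin] by blast
  thus ?thesis using p d unfolding sylow_subgroup_def by blast
qed

lemma (in group) sylow_index_ndvd:
  assumes fin: "finite (carrier G)" and S: "sylow_subgroup G p S"
  shows "\<not> p dvd card (rcosets S)"
proof
  assume "p dvd card (rcosets S)"
  then obtain r where r: "card (rcosets S) = p * r" by blast
  have sub: "subgroup S G" and p: "Factorial_Ring.prime p" and c: "card S = p ^ multiplicity p (order G)"
    using S unfolding sylow_subgroup_def by auto
  have "order G = p * r * p ^ multiplicity p (order G)" using lagrange[OF sub] r c by simp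
  hence "p ^ Suc (multiplicity p (order G)) dvd order G"
    by (metis dvd_triv_left mult.assoc mult.commute power_Suc)
  moreover have "order G \<noteq> 0" using fin order_gt_0_iff_finite by auto
  ultimately have "Suc (multiplicity p (order G)) \<le> multiplicity p (order G)"
    using multiplicity_geI p by (metis not_prime_unit)
  thus False by simp
qed

lemma (in group) sylow_conj_contains:
  assumes fin: "finite (carrier G)" and S: "sylow_subgroup G p S"
    and x: "x \<in> carrier G" "ord x = p ^ k"
  shows "\<exists>g\<in>carrier G. x \<in> (\<lambda>s. inv g \<otimes> s \<otimes> g) ` S"
proof -
  have sub: "subgroup S G" and p: "Factorial_Ring.prime p"
    using S unfolding sylow_subgroup_def by auto
  have Sc: "S \<subseteq> carrier G" using sub subgroup.subset by blast
  have H: "subgroup (generate G {x}) G" using generate_is_subgroup x(1) by simp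
  have cH: "card (generate G {x}) = p ^ k" using generate_pow_card[OF x(1)] x(2) by simp
  obtain g where g: "g \<in> carrier G" and fx: "\<forall>h\<in>generate G {x}. S #> g #> h = S #> g"
    using pgroup_fixed_coset[OF fin sub p sylow_index_ndvd[OF fin S] H cH] by blast
  have "x \<in> generate G {x}" using x(1) by (simp add: generate.incl)
  hence "S #> g #> x = S #> g" using fx by blast
  hence e: "S #> (g \<otimes> x) = S #> g" using coset_mult_assoc[OF Sc g x(1)] by simp
  have "g \<otimes> x \<in> S #> (g \<otimes> x)" using rcos_self[OF _ sub] g x(1) by simp
  hence "g \<otimes> x \<in> S #> g" using e by simp
  then obtain s where s: "s \<in> S" "g \<otimes> x = s \<otimes> g" unfolding r_coset_def by auto
  have sc: "s \<in> carrier G" using s(1) Sc by blast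
  have "x = inv g \<otimes> s \<otimes> g"
  proof -
    have "inv g \<otimes> (g \<otimes> x) = inv g \<otimes> (s \<otimes> g)" using s(2) by simp
    thus ?thesis using g x(1) sc by (simp add: m_assoc[symmetric])
  qed
  thus ?thesis using g s(1) by blast
qed

lemma (in group) is_power_of_iff:
  assumes "x \<in> carrier G"
  shows "is_power_of G y x \<longleftrightarrow> y \<in> generate G {x}"
  unfolding is_power_of_def generate_pow[OF assms] by auto

lemma (in group) nat_pow_in_generate:
  assumes "x \<in> carrier G"
  shows "x [^] (n::nat) \<in> generate G {x}"
  unfolding generate_pow[OF assms] by (metis (mono_tags, lifting) UNIV_I int_pow_int mem_Collect_eq)

lemma (in group) int_pow_in_generate:
  assumes "x \<in> carrier G"
  shows "x [^] (n::int) \<in> generate G {x}"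
  unfolding generate_pow[OF assms] by blast

lemma (in group) generate_sub_carrier:
  assumes "x \<in> carrier G"
  shows "generate G {x} \<subseteq> carrier G"
  using generate_is_subgroup assms subgroup.subset by (metis empty_subsetI insert_subset)

lemma (in group) generate_mono_elem:
  assumes "x \<in> carrier G" "y \<in> generate G {x}"
  shows "generate G {y} \<subseteq> generate G {x}"
  using generate_subgroup_incl[of "{y}" "generate G {x}"] generate_is_subgroup[of "{x}"] assms by auto

lemma (in group) card_subgroup_dvd:
  assumes "subgroup I G" "subgroup J G" "I \<subseteq> J"
  shows "card I dvd card J"
proof -
  have g: "group (G\<lparr>carrier := J\<rparr>)" using subgroup_imp_group[OF assms(2)] .
  have s: "subgroup I (G\<lparr>carrier := J\<rparr>)" using subgroup_incl[OF assms] .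
  have "card (rcosets\<^bsub>G\<lparr>carrier := J\<rparr>\<^esub> I) * card I = order (G\<lparr>carrier := J\<rparr>)"
    using group.lagrange[OF g s] .
  hence "card (rcosets\<^bsub>G\<lparr>carrier := J\<rparr>\<^esub> I) * card I = card J" by (simp add: order_def)
  thus ?thesis by (metis dvd_triv_right)
qed

lemma (in group) ord_dvd_subgroup:
  assumes "subgroup K G" "x \<in> K"
  shows "ord x dvd card K"
proof -
  have xc: "x \<in> carrier G" using assms subgroup.subset by blast
  have "generate G {x} \<subseteq> K" using generate_subgroup_incl[of "{x}" K] assms by auto
  hence "card (generate G {x}) dvd card K"
    using card_subgroup_dvd generate_is_subgroup assms xc by auto
  thus ?thesis using generate_pow_card[OF xc] by simp
qed

lemma (in group) ord_dvd_generate: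
  assumes "x \<in> carrier G" "y \<in> generate G {x}"
  shows "ord y dvd ord x"
  using ord_dvd_subgroup[of "generate G {x}" y] generate_is_subgroup[of "{x}"] assms generate_pow_card[OF assms(1)]
  by auto

lemma (in group) coprime_pow_generates:
  assumes y: "y \<in> carrier G" and fin: "finite (carrier G)" and cp: "coprime t (ord y)"
  shows "y \<in> generate G {y [^] (t::nat)}"
proof (cases "t = 0")
  case True
  hence "ord y = 1" using cp by simp
  hence "y = \<one>" using ord_eq_1 y by blast
  thus ?thesis using generate.one by simp
next
  case False
  obtain u v where uv: "t * u = ord y * v + gcd t (ord y)" using bezout_nat[OF False] by blast
  hence uv': "t * u = ord y * v + 1" using cp by simp
  have "(y [^] t) [^] u = y [^] (t * u)" using y nat_pow_pow by simp
  also have "\<dots> = y [^] (ord y * v) \<otimes> y [^] (1::nat)" using uv' y nat_pow_mult by simp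
  also have "\<dots> = y" using y by (simp add: nat_pow_pow[symmetric])
  finally have "y = (y [^] t) [^] u" by simp
  thus ?thesis using nat_pow_in_generate[of "y [^] t" u] y by simp
qed

lemma (in group) order_p_generate:
  assumes fin: "finite (carrier G)" and p: "Factorial_Ring.prime p"
    and x: "x \<in> carrier G" and w: "w \<in> generate G {x}" "ord w = p"
    and z: "z \<in> generate G {x}" "ord z = p"
  shows "w \<in> generate G {z}"
proof -
  define N where "N = ord x"
  have N0: "N \<noteq> 0" using ord_ge_1[OF fin x] N_def by simp
  have gx: "generate G {x} = {x [^] k | k. k \<in> (UNIV :: nat set)}"
    using generate_pow_nat[OF x] N0 N_def by simp
  obtain i where i: "w = x [^] (i::nat)" using w(1) gx by auto
  obtain j where j: "z = x [^] (j::nat)" using z(1) gx by auto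
  have p1: "p \<noteq> 1" "p \<noteq> 0" using p by auto
  have wc: "w \<in> carrier G" using i x by simp
  have zc: "z \<in> carrier G" using j x by simp
  have "x [^] (i*p) = (x [^] i) [^] p" using nat_pow_pow[OF x] by simp
  also have "\<dots> = w [^] ord w" using i w(2) by simp
  also have "\<dots> = \<one>" using wc by simp
  finally have Nip: "N dvd i * p" using pow_eq_id[OF x] N_def by simp
  have "x [^] (j*p) = (x [^] j) [^] p" using nat_pow_pow[OF x] by simp
  also have "\<dots> = z [^] ord z" using j z(2) by simp
  also have "\<dots> = \<one>" using zc by simp
  finally have Njp: "N dvd j * p" using pow_eq_id[OF x] N_def by simp
  have Nj: "\<not> N dvd j"
  proof
    assume "N dvd j"
    hence "z = \<one>" using j pow_eq_id[OF x] N_def by simp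
    thus False using z(2) p1 by simp
  qed
  have pN: "p dvd N"
  proof (rule ccontr)
    assume "\<not> p dvd N"
    hence "coprime N p" using prime_imp_coprime[OF p] coprime_commute by blast
    hence "N dvd j" using Njp by (simp add: coprime_dvd_mult_left_iff)
    thus False using Nj by simp
  qed
  then obtain d where d: "N = p * d" by blast
  have d0: "d \<noteq> 0" using d N0 by auto
  have "p * d dvd p * i" using Nip d by (simp add: mult.commute)
  hence "d dvd i" using p1 by (simp add: nat_mult_dvd_cancel_disj)
  then obtain i' where i': "i = d * i'" by blast
  have "p * d dvd p * j" using Njp d by (simp add: mult.commute)
  hence "d dvd j" using p1 by (simp add: nat_mult_dvd_cancel_disj)
  then obtain j' where j': "j = d * j'" by blast
  define y where "y = x [^] d"
  have yc: "y \<in> carrier G" using x y_def by simp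
  have "d dvd N" using d by simp
  hence oy: "ord y = p" using ord_pow[OF x _ d0] d d0 N_def y_def by simp
  have wy: "w = y [^] i'" using i i' y_def nat_pow_pow[OF x] by simp
  have zy: "z = y [^] j'" using j j' y_def nat_pow_pow[OF x] by simp
  have "\<not> p dvd j'"
  proof
    assume "p dvd j'"
    hence "N dvd j" using d j' by auto
    thus False using Nj by simp
  qed
  hence "coprime j' p" using prime_imp_coprime[OF p] coprime_commute by blast
  hence "coprime j' (ord y)" using oy by simp
  hence "y \<in> generate G {z}" using coprime_pow_generates[OF yc fin] zy by simp
  hence "generate G {y} \<subseteq> generate G {z}" using generate_mono_elem[OF zc] by blast
  moreover have "w \<in> generate G {y}" using wy nat_pow_in_generate[OF yc] by simp
  ultimately show ?thesis by blast
qed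

lemma (in group) order_p_mutual:
  assumes fin: "finite (carrier G)" and p: "Factorial_Ring.prime p"
    and a: "a \<in> carrier G" "ord a = p" and b: "b \<in> generate G {a}" "b \<noteq> \<one>"
  shows "a \<in> generate G {b}"
proof -
  have "ord b dvd p" using ord_dvd_generate[OF a(1) b(1)] a(2) by simp
  moreover have "ord b \<noteq> 1" using b ord_eq_1 a(1) generate_sub_carrier[OF a(1)] by blast
  ultimately have "ord b = p" using p by (meson prime_nat_iff)
  moreover have "a \<in> generate G {a}" using a(1) generate.incl by fast
  ultimately show ?thesis using order_p_generate[OF fin p a(1) _ a(2) b(1)] by blast
qed

lemma (in group) centre_subgroup:
  assumes P: "subgroup P G"
  shows "subgroup (group_centre G P) G"
proof (rule subgroupI)
  have Pc: "P \<subseteq> carrier G" using P subgroup.subset by blast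
  show "group_centre G P \<subseteq> carrier G" using Pc unfolding group_centre_def by auto
  have "\<one> \<in> group_centre G P"
    using subgroup.one_closed[OF P] Pc unfolding group_centre_def by (auto simp: subset_iff)
  thus "group_centre G P \<noteq> {}" by blast
  show "inv a \<in> group_centre G P" if a: "a \<in> group_centre G P" for a
  proof -
    have aP: "a \<in> P" and ac: "\<forall>x\<in>P. a \<otimes> x = x \<otimes> a" using a unfolding group_centre_def by auto
    have aC: "a \<in> carrier G" using aP Pc by blast
    have "inv a \<otimes> x = x \<otimes> inv a" if x: "x \<in> P" for x
    proof -
      have xc: "x \<in> carrier G" using x Pc by blast
      have "inv a \<otimes> x = inv a \<otimes> (x \<otimes> a) \<otimes> inv a" using aC xc by (simp add: m_assoc)
      also have "\<dots> = inv a \<otimes> (a \<otimes> x) \<otimes> inv a" using ac x by simp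
      also have "\<dots> = x \<otimes> inv a" using aC xc by (simp add: m_assoc[symmetric])
      finally show ?thesis .
    qed
    thus ?thesis using subgroup.m_inv_closed[OF P aP] unfolding group_centre_def by auto
  qed
  show "a \<otimes> b \<in> group_centre G P" if a: "a \<in> group_centre G P" and b: "b \<in> group_centre G P" for a b
  proof -
    have aP: "a \<in> P" and ac: "\<forall>x\<in>P. a \<otimes> x = x \<otimes> a" using a unfolding group_centre_def by auto
    have bP: "b \<in> P" and bc: "\<forall>x\<in>P. b \<otimes> x = x \<otimes> b" using b unfolding group_centre_def by auto
    have aC: "a \<in> carrier G" using aP Pc by blast
    have bC: "b \<in> carrier G" using bP Pc by blast
    have "a \<otimes> b \<otimes> x = x \<otimes> (a \<otimes> b)" if x: "x \<in> P" for x
    proof -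
      have xc: "x \<in> carrier G" using x Pc by blast
      have "a \<otimes> b \<otimes> x = a \<otimes> (b \<otimes> x)" using aC bC xc by (simp add: m_assoc)
      also have "\<dots> = a \<otimes> (x \<otimes> b)" using bc x by simp
      also have "\<dots> = (a \<otimes> x) \<otimes> b" using aC bC xc by (simp add: m_assoc)
      also have "\<dots> = (x \<otimes> a) \<otimes> b" using ac x by simp
      also have "\<dots> = x \<otimes> (a \<otimes> b)" using aC bC xc by (simp add: m_assoc)
      finally show ?thesis .
    qed
    thus ?thesis using subgroup.m_closed[OF P aP bP] unfolding group_centre_def by auto
  qed
qed

lemma (in group) cyclic_if_generated:
  assumes Z: "subgroup Z G" and z: "z \<in> Z" and e: "Z = generate G {z}"
  shows "cyclic_group (G\<lparr>carrier := Z\<rparr>)"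
proof -
  have g: "group (G\<lparr>carrier := Z\<rparr>)" using subgroup_imp_group[OF Z] .
  have zc: "z \<in> carrier G" using z Z subgroup.subset by blast
  have "Z = range (\<lambda>n::int. z [^] n)"
    using e generate_pow[OF zc] by auto
  also have "\<dots> = range (\<lambda>n::int. z [^]\<^bsub>G\<lparr>carrier := Z\<rparr>\<^esub> n)"
    using int_pow_consistent[OF Z z] by simp
  finally have "Z = range (\<lambda>n::int. z [^]\<^bsub>G\<lparr>carrier := Z\<rparr>\<^esub> n)" .
  thus ?thesis using group.cyclic_group[OF g] z by auto
qed

lemma (in group) sylow_elem_ord:
  assumes S: "sylow_subgroup G p P" and x: "x \<in> P"
  shows "\<exists>k. ord x = p ^ k"
proof -
  have sub: "subgroup P G" and p: "Factorial_Ring.prime p" and c: "card P = p ^ multiplicity p (order G)"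
    using S unfolding sylow_subgroup_def by auto
  have "ord x dvd p ^ multiplicity p (order G)" using ord_dvd_subgroup[OF sub x] c by simp
  thus ?thesis using divides_primepow_nat[OF p] by blast
qed

lemma (in group) centre_order_p_outside:
  assumes fin: "finite (carrier G)" and S: "sylow_subgroup G p P"
    and nc: "\<not> cyclic_group (G\<lparr>carrier := group_centre G P\<rparr>)" and x: "x \<in> carrier G"
  shows "\<exists>z\<in>group_centre G P. ord z = p \<and> z \<notin> generate G {x}"
proof (rule ccontr)
  assume "\<not> ?thesis"
  hence H: "\<And>z. z \<in> group_centre G P \<Longrightarrow> ord z = p \<Longrightarrow> z \<in> generate G {x}" by blast
  define Z where "Z = group_centre G P"
  have sub: "subgroup P G" and p: "Factorial_Ring.prime p" using S unfolding sylow_subgroup_def by auto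
  have Zs: "subgroup Z G" using centre_subgroup[OF sub] Z_def by simp
  have ZP: "Z \<subseteq> P" unfolding Z_def group_centre_def by auto
  have Pc: "P \<subseteq> carrier G" using sub subgroup.subset by blast
  have Zc: "Z \<subseteq> carrier G" using ZP Pc by blast
  have finZ: "finite Z" using Zc fin finite_subset by blast
  have comm: "\<And>a b. a \<in> Z \<Longrightarrow> b \<in> P \<Longrightarrow> a \<otimes> b = b \<otimes> a" unfolding Z_def group_centre_def by auto
  have ordp: "\<And>u. u \<in> Z \<Longrightarrow> \<exists>k. ord u = p^k" using sylow_elem_ord[OF S] ZP by blast
  have one: "\<one> \<in> Z" using subgroup.one_closed[OF Zs] .
  have p0: "p \<noteq> 0" "p > 1" using p prime_gt_1_nat by auto
  define M where "M = Max (ord ` Z)"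
  have "M \<in> ord ` Z" unfolding M_def using finZ one by (intro Max_in) auto
  then obtain z where z: "z \<in> Z" "ord z = M" by auto
  have zmax: "ord u \<le> ord z" if "u \<in> Z" for u
    using z(2) finZ that unfolding M_def by simp
  have zc: "z \<in> carrier G" using z Zc by blast
  have gzZ: "generate G {z} \<subseteq> Z" using generate_subgroup_incl[of "{z}" Z] Zs z by auto
  have "Z \<subseteq> generate G {z}"
  proof (rule ccontr)
    assume "\<not> Z \<subseteq> generate G {z}"
    hence Bne: "Z - generate G {z} \<noteq> {}" by blast
    define m where "m = Min (ord ` (Z - generate G {z}))"
    have "m \<in> ord ` (Z - generate G {z})" unfolding m_def using finZ Bne by (intro Min_in) auto
    then obtain y where y: "y \<in> Z" "y \<notin> generate G {z}" "ord y = m" by auto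
    have ymin: "m \<le> ord u" if "u \<in> Z" "u \<notin> generate G {z}" for u
      unfolding m_def using finZ that by simp
    have yc: "y \<in> carrier G" using y Zc by blast
    have y1: "y \<noteq> \<one>" using y(2) generate.one by blast
    obtain k where k: "ord y = p^k" using ordp y(1) by blast
    have k0: "k \<noteq> 0" using k y1 ord_eq_1[OF yc] by auto
    have pdy: "p dvd ord y" using k k0 by simp
    have oy0: "ord y > 0" using ord_ge_1[OF fin yc] by simp
    have "ord (y [^] p) = ord y div p" using ord_pow[OF yc pdy p0(1)] .
    hence lt: "ord (y [^] p) < ord y" using oy0 p0 by simp
    have ypgen: "y [^] p \<in> generate G {y}" using nat_pow_in_generate[OF yc] .
    have "generate G {y} \<subseteq> Z" using generate_subgroup_incl[of "{y}" Z] Zs y(1) by auto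
    hence ypZ: "y [^] p \<in> Z" using ypgen by blast
    have yp: "y [^] p \<in> generate G {z}"
    proof (rule ccontr)
      assume "y [^] p \<notin> generate G {z}"
      hence "m \<le> ord (y [^] p)" using ymin ypZ by blast
      thus False using lt y(3) by simp
    qed
    have oz0: "ord z \<noteq> 0" using ord_ge_1[OF fin zc] by simp
    obtain j where j: "y [^] p = z [^] (j::nat)" using yp generate_pow_nat[OF zc oz0] by auto
    obtain n where n: "ord z = p^n" using ordp z(1) by blast
    show False
    proof (cases "p dvd j")
      case False
      have "coprime j p" using prime_imp_coprime[OF p False] coprime_commute by blast
      hence "coprime j (ord z)" using n by simp
      hence "z \<in> generate G {z [^] j}" using coprime_pow_generates[OF zc fin] by blast
      hence zyp: "z \<in> generate G {y [^] p}" using j by simp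
      have "generate G {y [^] p} \<subseteq> generate G {y}" using generate_mono_elem[OF yc ypgen] .
      hence "z \<in> generate G {y}" using zyp by blast
      hence sub1: "generate G {z} \<subseteq> generate G {y}" using generate_mono_elem[OF yc] by blast
      have "y \<in> generate G {y}" using generate.incl by fast
      hence "generate G {z} \<subset> generate G {y}" using sub1 y(2) by blast
      moreover have "finite (generate G {y})" using generate_sub_carrier[OF yc] fin finite_subset by blast
      ultimately have "card (generate G {z}) < card (generate G {y})" using psubset_card_mono by blast
      hence "ord z < ord y" using generate_pow_card[OF zc] generate_pow_card[OF yc] by simp
      thus False using zmax[OF y(1)] by simp
    next
      case True
      then obtain j' where j': "j = p * j'" by blast
      have zj'gen: "z [^] j' \<in> generate G {z}" using nat_pow_in_generate[OF zc] .
      have zj'c: "z [^] j' \<in> carrier G" using zc by simp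
      define v where "v = inv (z [^] j')"
      have vZ: "v \<in> Z" using subgroup.m_inv_closed[OF Zs] zj'gen gzZ v_def by blast
      have vc: "v \<in> carrier G" using v_def zj'c by simp
      define w where "w = y \<otimes> v"
      have wZ: "w \<in> Z" using subgroup.m_closed[OF Zs y(1) vZ] w_def by simp
      have wc: "w \<in> carrier G" using w_def yc vc by simp
      have yv: "y \<otimes> v = v \<otimes> y" using comm[OF y(1)] vZ ZP by blast
      have vp: "v [^] p = inv (z [^] j)"
      proof -
        have "v [^] p = inv ((z [^] j') [^] p)" using v_def nat_pow_inv[OF zj'c] by simp
        also have "(z [^] j') [^] p = z [^] j" using nat_pow_pow[OF zc] j' by (simp add: mult.commute)
        finally show ?thesis .
      qed
      have "w [^] p = y [^] p \<otimes> v [^] p" using pow_mult_distrib[OF yv yc vc] w_def by simp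
      also have "\<dots> = \<one>" using vp j yc zc by simp
      finally have wp: "w [^] p = \<one>" .
      have wnot: "w \<notin> generate G {z}"
      proof
        assume wg: "w \<in> generate G {z}"
        have gs: "subgroup (generate G {z}) G" using generate_is_subgroup zc by simp
        have "w \<otimes> z [^] j' \<in> generate G {z}" using subgroup.m_closed[OF gs wg zj'gen] .
        moreover have "w \<otimes> z [^] j' = y" using w_def v_def yc zj'c by (simp add: m_assoc)
        ultimately show False using y(2) by simp
      qed
      have w1: "w \<noteq> \<one>" using wnot generate.one by blast
      have "ord w dvd p" using pow_eq_id[OF wc] wp by simp
      moreover have "ord w \<noteq> 1" using w1 ord_eq_1[OF wc] by simp
      ultimately have ow: "ord w = p" using p by (meson prime_nat_iff)
      have wx: "w \<in> generate G {x}" using H wZ ow Z_def by simp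
      have n0: "n \<noteq> 0"
      proof
        assume "n = 0"
        hence "ord z = 1" using n by simp
        moreover have "ord y \<ge> p" using k k0 p0 by (simp add: self_le_power)
        ultimately show False using zmax[OF y(1)] p0 by simp
      qed
      define z' where "z' = z [^] (p^(n-1))"
      have pn: "p^n = p^(n-1) * p" using n0 by (metis power_minus_mult zero_less_iff_neq_zero)
      have dv: "p^(n-1) dvd ord z" using n pn by simp
      have "ord z' = ord z div p^(n-1)" using ord_pow[OF zc dv] p0 z'_def by simp
      hence oz': "ord z' = p" using n pn p0 by simp
      have z'gen: "z' \<in> generate G {z}" using z'_def nat_pow_in_generate[OF zc] by simp
      have z'x: "z' \<in> generate G {x}" using H z'gen gzZ oz' Z_def by blast
      have "w \<in> generate G {z'}" using order_p_generate[OF fin p x wx ow z'x oz'] .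
      moreover have "generate G {z'} \<subseteq> generate G {z}" using generate_mono_elem[OF zc z'gen] .
      ultimately show False using wnot by blast
    qed
  qed
  hence "Z = generate G {z}" using gzZ by blast
  hence "cyclic_group (G\<lparr>carrier := Z\<rparr>)" using cyclic_if_generated[OF Zs z(1)] by simp
  thus False using nc Z_def by simp
qed

definition cpR :: "('a, 'b) monoid_scheme \<Rightarrow> ('a \<times> 'a) set" where
  "cpR G = {(x, y). x \<in> carrier G - {\<one>\<^bsub>G\<^esub>} \<and> y \<in> carrier G - {\<one>\<^bsub>G\<^esub>} \<and> ComPow_adj G x y}"

lemma cpR_sym: "(x, y) \<in> cpR G \<Longrightarrow> (y, x) \<in> cpR G"
  unfolding cpR_def ComPow_adj_def by auto

lemma cpR_rtrancl_sym:
  assumes "(x, y) \<in> (cpR G)\<^sup>*"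
  shows "(y, x) \<in> (cpR G)\<^sup>*"
  using assms
proof (induction rule: rtrancl_induct)
  case base thus ?case by simp
next
  case (step y z)
  have "(z, y) \<in> cpR G" using cpR_sym step(2) .
  thus ?case using step(3) by (meson converse_rtrancl_into_rtrancl)
qed

lemma (in group) inv_cancel_l2 [simp]:
  "h \<in> carrier G \<Longrightarrow> z \<in> carrier G \<Longrightarrow> inv h \<otimes> (h \<otimes> z) = z"
  by (simp add: m_assoc[symmetric])

lemma (in group) inv_cancel_l3 [simp]:
  "h \<in> carrier G \<Longrightarrow> z \<in> carrier G \<Longrightarrow> h \<otimes> (inv h \<otimes> z) = z"
  by (simp add: m_assoc[symmetric])

lemma (in group) conj_hom:
  assumes h: "h \<in> carrier G"
  shows "(\<lambda>x. h \<otimes> x \<otimes> inv h) \<in> hom G G"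
  unfolding hom_def using h by (auto simp: m_assoc)

lemma (in group) conj_int_pow:
  assumes h: "h \<in> carrier G" and x: "x \<in> carrier G"
  shows "h \<otimes> (x [^] (k::int)) \<otimes> inv h = (h \<otimes> x \<otimes> inv h) [^] k"
  using hom_int_pow[OF conj_hom[OF h] x is_group is_group] .

lemma (in group) conj_nat_pow:
  assumes h: "h \<in> carrier G" and x: "x \<in> carrier G"
  shows "h \<otimes> (x [^] (k::nat)) \<otimes> inv h = (h \<otimes> x \<otimes> inv h) [^] k"
  using hom_nat_pow[OF conj_hom[OF h] x is_group is_group] .

lemma (in group) conj_inj:
  assumes h: "h \<in> carrier G" and x: "x \<in> carrier G" and y: "y \<in> carrier G"
    and e: "h \<otimes> x \<otimes> inv h = h \<otimes> y \<otimes> inv h"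
  shows "x = y"
  using e h x y by simp

lemma (in group) conj_ord:
  assumes h: "h \<in> carrier G" and x: "x \<in> carrier G"
  shows "ord (h \<otimes> x \<otimes> inv h) = ord x"
proof -
  have c: "h \<otimes> x \<otimes> inv h \<in> carrier G" using h x by simp
  have "(h \<otimes> x \<otimes> inv h) [^] n = \<one> \<longleftrightarrow> x [^] n = \<one>" for n :: nat
  proof -
    have "(h \<otimes> x \<otimes> inv h) [^] n = h \<otimes> (x [^] n) \<otimes> inv h" using conj_nat_pow[OF h x] by simp
    moreover have "h \<otimes> (x [^] n) \<otimes> inv h = \<one> \<longleftrightarrow> x [^] n = \<one>"
    proof
      assume "h \<otimes> (x [^] n) \<otimes> inv h = \<one>"
      hence "h \<otimes> (x [^] n) \<otimes> inv h = h \<otimes> \<one> \<otimes> inv h" using h by simp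
      thus "x [^] n = \<one>" using conj_inj[OF h] x by simp
    next
      assume "x [^] n = \<one>" thus "h \<otimes> (x [^] n) \<otimes> inv h = \<one>" using h by simp
    qed
    ultimately show ?thesis by simp
  qed
  thus ?thesis using ord_unique[OF c] pow_eq_id[OF x] by metis
qed

lemma (in group) conj_cpR:
  assumes h: "h \<in> carrier G" and xy: "(x, y) \<in> cpR G"
  shows "(h \<otimes> x \<otimes> inv h, h \<otimes> y \<otimes> inv h) \<in> cpR G"
proof -
  have x: "x \<in> carrier G" "x \<noteq> \<one>" and y: "y \<in> carrier G" "y \<noteq> \<one>" and a: "ComPow_adj G x y"
    using xy unfolding cpR_def by auto
  let ?c = "\<lambda>u. h \<otimes> u \<otimes> inv h"
  have c1: "?c u \<noteq> \<one>" if "u \<in> carrier G" "u \<noteq> \<one>" for u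
  proof
    assume "?c u = \<one>"
    hence "?c u = ?c \<one>" using h by simp
    thus False using conj_inj[OF h that(1)] that(2) by simp
  qed
  have neq: "?c x \<noteq> ?c y" using a conj_inj[OF h x(1) y(1)] unfolding ComPow_adj_def by blast
  have cm: "?c x \<otimes> ?c y = ?c y \<otimes> ?c x"
  proof -
    have "?c x \<otimes> ?c y = ?c (x \<otimes> y)" using h x y by (simp add: m_assoc)
    also have "\<dots> = ?c (y \<otimes> x)" using a unfolding ComPow_adj_def by simp
    also have "\<dots> = ?c y \<otimes> ?c x" using h x y by (simp add: m_assoc)
    finally show ?thesis .
  qed
  have np: "\<not> is_power_of G (?c u) (?c v)" if "u \<in> carrier G" "v \<in> carrier G" "\<not> is_power_of G u v" for u v
  proof
    assume "is_power_of G (?c u) (?c v)"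
    then obtain k where k: "?c u = (?c v) [^] (k::int)" unfolding is_power_of_def by blast
    hence "?c u = ?c (v [^] k)" using conj_int_pow[OF h that(2)] by simp
    hence "u = v [^] k" using conj_inj[OF h that(1)] that(2) by simp
    thus False using that(3) unfolding is_power_of_def by blast
  qed
  have "ComPow_adj G (?c x) (?c y)"
    using neq cm np[OF x(1) y(1)] np[OF y(1) x(1)] a unfolding ComPow_adj_def by blast
  thus ?thesis unfolding cpR_def using c1 x y h by auto
qed

lemma (in group) conj_cpR_rtrancl:
  assumes h: "h \<in> carrier G" and xy: "(x, y) \<in> (cpR G)\<^sup>*"
  shows "(h \<otimes> x \<otimes> inv h, h \<otimes> y \<otimes> inv h) \<in> (cpR G)\<^sup>*"
  using xy
proof (induction rule: rtrancl_induct)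
  case base thus ?case by simp
next
  case (step y z)
  thus ?case using conj_cpR[OF h step(2)] by (meson rtrancl_into_rtrancl)
qed

lemma (in group) adj_order_p:
  assumes fin: "finite (carrier G)" and p: "Factorial_Ring.prime p"
    and a: "a \<in> carrier G" "a \<noteq> \<one>" and b: "b \<in> carrier G" "ord b = p"
    and cm: "a \<otimes> b = b \<otimes> a" and nb: "b \<notin> generate G {a}"
  shows "(a, b) \<in> cpR G"
proof -
  have b1: "b \<noteq> \<one>" using b p ord_eq_1 by (metis not_prime_1)
  have "a \<notin> generate G {b}"
  proof
    assume "a \<in> generate G {b}"
    hence "b \<in> generate G {a}" using order_p_mutual[OF fin p b(1) b(2) _ a(2)] by blast
    thus False using nb by simp
  qed
  moreover have "a \<noteq> b" using nb a(1) generate.incl by fast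
  ultimately show ?thesis unfolding cpR_def ComPow_adj_def
    using is_power_of_iff a b b1 cm nb by auto
qed

lemma (in group) sylow_adj_centre:
  assumes fin: "finite (carrier G)" and S: "sylow_subgroup G p P"
    and nc: "\<not> cyclic_group (G\<lparr>carrier := group_centre G P\<rparr>)"
    and x: "x \<in> P" "x \<noteq> \<one>"
  shows "\<exists>z\<in>group_centre G P. ord z = p \<and> (x, z) \<in> cpR G"
proof -
  have sub: "subgroup P G" and p: "Factorial_Ring.prime p" using S unfolding sylow_subgroup_def by auto
  have Pc: "P \<subseteq> carrier G" using sub subgroup.subset by blast
  have xc: "x \<in> carrier G" using x Pc by blast
  obtain z where z: "z \<in> group_centre G P" "ord z = p" "z \<notin> generate G {x}"
    using centre_order_p_outside[OF fin S nc xc] by blast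
  have zP: "z \<in> P" using z(1) unfolding group_centre_def by auto
  have zc: "z \<in> carrier G" using zP Pc by blast
  have "z \<otimes> x = x \<otimes> z" using z(1) x(1) unfolding group_centre_def by auto
  hence "(x, z) \<in> cpR G" using adj_order_p[OF fin p xc x(2) zc z(2) _ z(3)] by simp
  thus ?thesis using z by blast
qed

lemma (in group) sylow_cp:
  assumes fin: "finite (carrier G)" and S: "sylow_subgroup G p P"
    and nc: "\<not> cyclic_group (G\<lparr>carrier := group_centre G P\<rparr>)"
    and x: "x \<in> P" "x \<noteq> \<one>" and y: "y \<in> P" "y \<noteq> \<one>"
  shows "(x, y) \<in> (cpR G)\<^sup>*"
proof -
  have sub: "subgroup P G" and p: "Factorial_Ring.prime p" using S unfolding sylow_subgroup_def by auto
  have Pc: "P \<subseteq> carrier G" using sub subgroup.subset by blast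
  obtain zx where zx: "zx \<in> group_centre G P" "ord zx = p" "(x, zx) \<in> cpR G"
    using sylow_adj_centre[OF fin S nc x] by blast
  obtain zy where zy: "zy \<in> group_centre G P" "ord zy = p" "(y, zy) \<in> cpR G"
    using sylow_adj_centre[OF fin S nc y] by blast
  have zxP: "zx \<in> P" using zx(1) unfolding group_centre_def by auto
  have zyP: "zy \<in> P" using zy(1) unfolding group_centre_def by auto
  have zxc: "zx \<in> carrier G" using zxP Pc by blast
  have zyc: "zy \<in> carrier G" using zyP Pc by blast
  have zx1: "zx \<noteq> \<one>" using zx(2) p ord_eq_1[OF zxc] by (metis not_prime_1)
  have zy1: "zy \<noteq> \<one>" using zy(2) p ord_eq_1[OF zyc] by (metis not_prime_1)
  have mid: "(zx, zy) \<in> (cpR G)\<^sup>*"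
  proof (cases "zy \<in> generate G {zx}")
    case False
    have "zx \<otimes> zy = zy \<otimes> zx" using zx(1) zyP unfolding group_centre_def by auto
    thus ?thesis using adj_order_p[OF fin p zxc zx1 zyc zy(2) _ False] by blast
  next
    case True
    obtain c where c: "c \<in> group_centre G P" "ord c = p" "c \<notin> generate G {zx}"
      using centre_order_p_outside[OF fin S nc zxc] by blast
    have cP: "c \<in> P" using c(1) unfolding group_centre_def by auto
    have cc: "c \<in> carrier G" using cP Pc by blast
    have "zx \<otimes> c = c \<otimes> zx" using zx(1) cP unfolding group_centre_def by auto
    hence a1: "(zx, c) \<in> cpR G" using adj_order_p[OF fin p zxc zx1 cc c(2) _ c(3)] by blast
    have "generate G {zy} \<subseteq> generate G {zx}" using generate_mono_elem[OF zxc True] .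
    hence "c \<notin> generate G {zy}" using c(3) by blast
    moreover have "zy \<otimes> c = c \<otimes> zy" using zy(1) cP unfolding group_centre_def by auto
    ultimately have a2: "(zy, c) \<in> cpR G" using adj_order_p[OF fin p zyc zy1 cc c(2)] by blast
    have "(c, zy) \<in> cpR G" using cpR_sym[OF a2] .
    thus ?thesis using a1 by (meson converse_rtrancl_into_rtrancl r_into_rtrancl)
  qed
  have "(zy, y) \<in> cpR G" using cpR_sym[OF zy(3)] .
  hence "(zx, y) \<in> (cpR G)\<^sup>*" using mid by (meson rtrancl_into_rtrancl)
  thus ?thesis using zx(3) by (meson converse_rtrancl_into_rtrancl)
qed

lemma (in group) pq_adj:
  assumes g: "g \<in> carrier G" and o: "ord g = p * q"
    and p: "Factorial_Ring.prime p" and q: "Factorial_Ring.prime q" and pq: "p \<noteq> q"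
  shows "(g [^] q, g [^] p) \<in> cpR G \<and> ord (g [^] q) = p \<and> ord (g [^] p) = q"
proof -
  have q0: "q \<noteq> 0" using q by auto
  have p0: "p \<noteq> 0" using p by auto
  have o1: "ord (g [^] q) = p" using ord_pow[OF g _ q0] o q0 by simp
  have o2: "ord (g [^] p) = q" using ord_pow[OF g _ p0] o p0 by simp
  have c1: "g [^] q \<in> carrier G" "g [^] p \<in> carrier G" using g by auto
  have n1: "g [^] q \<noteq> \<one>" using o1 p by (metis not_prime_1 ord_id)
  have n2: "g [^] p \<noteq> \<one>" using o2 q by (metis not_prime_1 ord_id)
  have ne: "g [^] q \<noteq> g [^] p" using o1 o2 pq by metis
  have cm: "g [^] q \<otimes> g [^] p = g [^] p \<otimes> g [^] q" using nat_pow_comm[OF g] by simp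
  have np1: "g [^] q \<notin> generate G {g [^] p}"
  proof
    assume "g [^] q \<in> generate G {g [^] p}"
    hence "p dvd q" using ord_dvd_generate[OF c1(2)] o1 o2 by metis
    thus False using primes_dvd_imp_eq[OF p q] pq by blast
  qed
  have np2: "g [^] p \<notin> generate G {g [^] q}"
  proof
    assume "g [^] p \<in> generate G {g [^] q}"
    hence "q dvd p" using ord_dvd_generate[OF c1(1)] o1 o2 by metis
    thus False using primes_dvd_imp_eq[OF q p] pq by blast
  qed
  have "ComPow_adj G (g [^] q) (g [^] p)"
    unfolding ComPow_adj_def using ne cm np1 np2 is_power_of_iff c1 by blast
  thus ?thesis unfolding cpR_def using c1 n1 n2 o1 o2 by auto
qed

definition prime_power_ord :: "('a, 'b) monoid_scheme \<Rightarrow> 'a \<Rightarrow> bool" where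
  "prime_power_ord G x \<longleftrightarrow> (\<exists>p k. Factorial_Ring.prime p \<and> group.ord G x = p ^ k)"

lemma (in group) primary_decomp:
  assumes fin: "finite (carrier G)" and Xs: "subgroup Xs G" and w: "w \<in> carrier G"
    and H: "\<And>k::nat. prime_power_ord G (w [^] k) \<Longrightarrow> w [^] k \<in> Xs"
  shows "w \<in> Xs"
  using w H
proof (induction "ord w" arbitrary: w rule: less_induct)
  case less
  show ?case
  proof (cases "prime_power_ord G w")
    case True
    thus ?thesis using less(3)[of 1] less(2) by simp
  next
    case False
    define n where "n = ord w"
    have n1: "n \<noteq> 1"
    proof
      assume "n = 1"
      hence "prime_power_ord G w" unfolding prime_power_ord_def n_def
        by (metis power_0 two_is_prime_nat)
      thus False using False by simp
    qed
    have n0: "n \<noteq> 0" using ord_ge_1[OF fin less(2)] n_def by simp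
    obtain p where p: "Factorial_Ring.prime p" "p dvd n" using prime_factor_nat[OF n1] by blast
    define a where "a = p ^ multiplicity p n"
    define b where "b = n div a"
    have adv: "a dvd n" unfolding a_def by (rule multiplicity_dvd)
    have nab: "n = a * b" unfolding b_def using adv by simp
    have a1: "a \<noteq> 1"
    proof -
      have pu: "\<not> is_unit p" using p(1) not_prime_unit by blast
      have "p ^ 1 dvd n" using p(2) by simp
      hence "multiplicity p n \<ge> 1" using multiplicity_geI[of n p 1] n0 pu by blast
      thus ?thesis unfolding a_def using p by (metis One_nat_def less_one not_less power_0 power_inject_exp prime_gt_1_nat)
    qed
    have b1: "b \<noteq> 1"
    proof
      assume "b = 1"
      hence "ord w = p ^ multiplicity p n" using nab a_def n_def by simp
      thus False using False p(1) unfolding prime_power_ord_def by blast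
    qed
    have a0: "a \<noteq> 0" using nab n0 by auto
    have b0: "b \<noteq> 0" using nab n0 by auto
    have "\<not> p dvd b" unfolding b_def a_def using multiplicity_decompose[of n p] n0 p(1) prime_gt_1_nat by fastforce
    hence "coprime p b" using prime_imp_coprime[OF p(1)] by blast
    hence cab: "coprime a b" unfolding a_def by simp
    have ow1: "ord (w [^] a) = b" using ord_pow[OF less(2) _ a0] adv nab n_def a0 by simp
    have ow2: "ord (w [^] b) = a" using ord_pow[OF less(2) _ b0] nab n_def b0 by simp
    have "1 * b < a * b" using a1 a0 b0 by (intro mult_strict_right_mono) auto
    hence lt1: "b < n" using nab by simp
    have "1 * a < b * a" using b1 a0 b0 by (intro mult_strict_right_mono) auto
    hence lt2: "a < n" using nab by (simp add: mult.commute)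
    have wa: "w [^] a \<in> Xs"
    proof (rule less(1))
      show "ord (w [^] a) < ord w" using ow1 lt1 n_def by simp
      show "w [^] a \<in> carrier G" using less(2) by simp
      show "(w [^] a) [^] k \<in> Xs" if "prime_power_ord G ((w [^] a) [^] k)" for k :: nat
        using less(3)[of "a * k"] that nat_pow_pow[OF less(2)] by simp
    qed
    have wb: "w [^] b \<in> Xs"
    proof (rule less(1))
      show "ord (w [^] b) < ord w" using ow2 lt2 n_def by simp
      show "w [^] b \<in> carrier G" using less(2) by simp
      show "(w [^] b) [^] k \<in> Xs" if "prime_power_ord G ((w [^] b) [^] k)" for k :: nat
        using less(3)[of "b * k"] that nat_pow_pow[OF less(2)] by simp
    qed
    obtain s t where st: "s * int a + t * int b = gcd (int a) (int b)" using bezout_int by blast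
    have "coprime (int a) (int b)" using cab by simp
    hence "gcd (int a) (int b) = 1" by (rule coprime_imp_gcd_eq_1)
    hence st1: "int a * s + int b * t = 1" using st by (simp add: mult.commute)
    have wc: "w \<in> carrier G" by (rule less(2))
    have "w = w [^] (1::int)" using wc by simp
    also have "\<dots> = w [^] (int a * s + int b * t)" using st1 by simp
    also have "\<dots> = w [^] (int a * s) \<otimes> w [^] (int b * t)" by (rule int_pow_mult[OF wc])
    also have "w [^] (int a * s) = (w [^] (int a)) [^] s" by (rule int_pow_pow[OF wc, symmetric])
    also have "w [^] (int b * t) = (w [^] (int b)) [^] t" by (rule int_pow_pow[OF wc, symmetric])
    also have "w [^] (int a) = w [^] a" by (rule int_pow_int)
    also have "w [^] (int b) = w [^] b" by (rule int_pow_int)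
    finally have "w = (w [^] a) [^] s \<otimes> (w [^] b) [^] t" .
    moreover have "(w [^] a) [^] s \<in> Xs" using subgroup_int_pow_closed[OF Xs wa] .
    moreover have "(w [^] b) [^] t \<in> Xs" using subgroup_int_pow_closed[OF Xs wb] .
    ultimately show ?thesis using subgroup.m_closed[OF Xs] by metis
  qed
qed

lemma (in group) mixed_adj:
  assumes fin: "finite (carrier G)" and npp: "\<not> prime_power_ord G x" and xw: "(x, w) \<in> cpR G"
  shows "\<exists>u. (x, u) \<in> cpR G \<and> prime_power_ord G u"
proof -
  have x: "x \<in> carrier G" "x \<noteq> \<one>" and w: "w \<in> carrier G" and a: "ComPow_adj G x w"
    using xw unfolding cpR_def by auto
  have cm: "x \<otimes> w = w \<otimes> x" using a unfolding ComPow_adj_def by simp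
  have wn: "w \<notin> generate G {x}" using a is_power_of_iff[OF x(1)] unfolding ComPow_adj_def by blast
  have Xs: "subgroup (generate G {x}) G" using generate_is_subgroup x(1) by simp
  obtain k where k: "prime_power_ord G (w [^] (k::nat))" "w [^] k \<notin> generate G {x}"
    using primary_decomp[OF fin Xs w] wn by blast
  define u where "u = w [^] k"
  have uc: "u \<in> carrier G" using u_def w by simp
  have u1: "u \<noteq> \<one>" using k(2) u_def generate.one by metis
  have cu: "x \<otimes> u = u \<otimes> x" using group_commutes_pow[OF cm[symmetric] w x(1)] u_def by simp
  have xn: "x \<notin> generate G {u}"
  proof
    assume "x \<in> generate G {u}"
    hence d: "ord x dvd ord u" using ord_dvd_generate[OF uc] by blast
    obtain p e where pe: "Factorial_Ring.prime p" "ord u = p ^ e" using k(1) u_def unfolding prime_power_ord_def by blast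
    obtain i where "ord x = p ^ i" using d pe divides_primepow_nat[OF pe(1)] by auto
    thus False using npp pe(1) unfolding prime_power_ord_def by blast
  qed
  have xu: "x \<noteq> u" using k(2) u_def x(1) generate.incl by fast
  have "ComPow_adj G x u" unfolding ComPow_adj_def
    using xu cu xn k(2) u_def is_power_of_iff[OF x(1)] is_power_of_iff[OF uc] by blast
  hence "(x, u) \<in> cpR G" unfolding cpR_def using x uc u1 by auto
  thus ?thesis using k(1) u_def by blast
qed

lemma (in group) main_conn:
  assumes fin: "finite (carrier G)"
    and gk: "graph_connected (GK_vertices G) (GK_adj G)"
    and syl: "\<And>p P. sylow_subgroup G p P \<Longrightarrow> \<not> cyclic_group (G\<lparr>carrier := group_centre G P\<rparr>)"
    and noiso: "\<And>v. v \<in> carrier G - {\<one>} \<Longrightarrow> \<exists>w\<in>carrier G - {\<one>}. w \<noteq> v \<and> ComPow_adj G v w"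
  shows "\<forall>u\<in>carrier G - {\<one>}. \<forall>v\<in>carrier G - {\<one>}. (u, v) \<in> (cpR G)\<^sup>*"
proof (cases "carrier G - {\<one>} = {}")
  case True thus ?thesis by blast
next
  case False
  then obtain e where e: "e \<in> carrier G" "e \<noteq> \<one>" by blast
  have "{\<one>, e} \<subseteq> carrier G" using e by simp
  hence "card {\<one>, e} \<le> order G" unfolding order_def using fin card_mono by blast
  hence "order G \<noteq> 1" using e by simp
  then obtain p0 where p0: "Factorial_Ring.prime p0" "p0 dvd order G" using prime_factor_nat by blast
  have oG0: "order G \<noteq> 0" using fin order_gt_0_iff_finite by auto
  obtain P0 where P0: "sylow_subgroup G p0 P0" using sylow_exists[OF fin p0] by blast
  have "1 \<le> multiplicity p0 (order G)"
    using multiplicity_geI[of "order G" p0 1] p0 oG0 not_prime_unit by auto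
  hence "p0 ^ 1 \<le> p0 ^ multiplicity p0 (order G)"
    by (rule power_increasing) (use p0(1) prime_gt_1_nat[of p0] in linarith)
  hence "p0 ^ 1 \<le> card P0" using P0 unfolding sylow_subgroup_def by simp
  moreover have "p0 > 1" using p0(1) prime_gt_1_nat by blast
  ultimately have "card P0 > 1" by simp
  have "\<not> P0 \<subseteq> {\<one>}"
  proof
    assume "P0 \<subseteq> {\<one>}"
    hence "card P0 \<le> card {\<one>}" by (intro card_mono) auto
    thus False using \<open>card P0 > 1\<close> by simp
  qed
  then obtain a0 where a0: "a0 \<in> P0" "a0 \<noteq> \<one>" by blast
  have a0c: "a0 \<in> carrier G" using a0 P0 subgroup.subset unfolding sylow_subgroup_def by blast
  define K where "K = (\<lambda>v. (a0, v) \<in> (cpR G)\<^sup>*)"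
  define N where "N = {h \<in> carrier G. (a0, h \<otimes> a0 \<otimes> inv h) \<in> (cpR G)\<^sup>*}"
  have Nsub: "subgroup N G"
  proof (rule subgroupI)
    show "N \<subseteq> carrier G" unfolding N_def by blast
    have "\<one> \<in> N" unfolding N_def using a0c by simp
    thus "N \<noteq> {}" by blast
    show "inv h \<in> N" if h: "h \<in> N" for h
    proof -
      have hc: "h \<in> carrier G" and r: "(a0, h \<otimes> a0 \<otimes> inv h) \<in> (cpR G)\<^sup>*" using h unfolding N_def by auto
      have "(inv h \<otimes> a0 \<otimes> inv (inv h), inv h \<otimes> (h \<otimes> a0 \<otimes> inv h) \<otimes> inv (inv h)) \<in> (cpR G)\<^sup>*"
        using conj_cpR_rtrancl[OF inv_closed[OF hc] r] .
      moreover have "inv h \<otimes> (h \<otimes> a0 \<otimes> inv h) \<otimes> inv (inv h) = a0" using hc a0c by (simp add: m_assoc)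
      ultimately have "(inv h \<otimes> a0 \<otimes> inv (inv h), a0) \<in> (cpR G)\<^sup>*" by simp
      thus ?thesis unfolding N_def using hc cpR_rtrancl_sym by auto
    qed
    show "g \<otimes> h \<in> N" if g: "g \<in> N" and h: "h \<in> N" for g h
    proof -
      have gc: "g \<in> carrier G" and rg: "(a0, g \<otimes> a0 \<otimes> inv g) \<in> (cpR G)\<^sup>*" using g unfolding N_def by auto
      have hc: "h \<in> carrier G" and rh: "(a0, h \<otimes> a0 \<otimes> inv h) \<in> (cpR G)\<^sup>*" using h unfolding N_def by auto
      have "(g \<otimes> a0 \<otimes> inv g, g \<otimes> (h \<otimes> a0 \<otimes> inv h) \<otimes> inv g) \<in> (cpR G)\<^sup>*"
        using conj_cpR_rtrancl[OF gc rh] .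
      moreover have "g \<otimes> (h \<otimes> a0 \<otimes> inv h) \<otimes> inv g = (g \<otimes> h) \<otimes> a0 \<otimes> inv (g \<otimes> h)"
        using gc hc a0c by (simp add: m_assoc inv_mult_group)
      ultimately have "(a0, (g \<otimes> h) \<otimes> a0 \<otimes> inv (g \<otimes> h)) \<in> (cpR G)\<^sup>*"
        using rg by (metis rtrancl_trans)
      thus ?thesis unfolding N_def using gc hc by simp
    qed
  qed
  have F1: "S \<subseteq> N" if S: "sylow_subgroup G q S" and z: "z \<in> S" "z \<noteq> \<one>" "K z" for q S z
  proof
    fix h assume h: "h \<in> S"
    have Sc: "S \<subseteq> carrier G" using S subgroup.subset unfolding sylow_subgroup_def by blast
    have hc: "h \<in> carrier G" and zc: "z \<in> carrier G" using h z Sc by auto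
    have Ssub: "subgroup S G" using S unfolding sylow_subgroup_def by blast
    have hz: "h \<otimes> z \<otimes> inv h \<in> S"
      using Ssub h z(1) by (simp add: subgroup.m_closed subgroup.m_inv_closed)
    have hz1: "h \<otimes> z \<otimes> inv h \<noteq> \<one>"
    proof
      assume "h \<otimes> z \<otimes> inv h = \<one>"
      hence "h \<otimes> z \<otimes> inv h = h \<otimes> \<one> \<otimes> inv h" using hc by simp
      thus False using conj_inj[OF hc zc] z(2) by simp
    qed
    have r1: "(z, h \<otimes> z \<otimes> inv h) \<in> (cpR G)\<^sup>*" using sylow_cp[OF fin S syl[OF S] z(1,2) hz hz1] .
    have r2: "(h \<otimes> a0 \<otimes> inv h, h \<otimes> z \<otimes> inv h) \<in> (cpR G)\<^sup>*"
      using conj_cpR_rtrancl[OF hc] z(3) unfolding K_def by blast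
    have "(a0, h \<otimes> a0 \<otimes> inv h) \<in> (cpR G)\<^sup>*"
      using z(3) r1 cpR_rtrancl_sym[OF r2] unfolding K_def by (meson rtrancl_trans)
    thus "h \<in> N" unfolding N_def using hc by simp
  qed
  define Kp where "Kp = (\<lambda>q. \<exists>S. sylow_subgroup G q S \<and> (\<exists>y\<in>S. y \<noteq> \<one> \<and> K y))"
  have Kp0: "Kp p0" unfolding Kp_def K_def using P0 a0 by blast
  have F2: "Kp q" if pq: "GK_adj G p q" and pv: "p \<in> GK_vertices G" and qv: "q \<in> GK_vertices G"
    and Kpp: "Kp p" for p q
  proof -
    have p: "Factorial_Ring.prime p" "p dvd order G" using pv unfolding GK_vertices_def by auto
    have q: "Factorial_Ring.prime q" "q dvd order G" using qv unfolding GK_vertices_def by auto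
    obtain g where g: "g \<in> carrier G" "ord g = p * q" and pnq: "p \<noteq> q" using pq unfolding GK_adj_def by blast
    obtain S y where S: "sylow_subgroup G p S" and y: "y \<in> S" "y \<noteq> \<one>" "K y"
      using Kpp unfolding Kp_def by blast
    have Sc: "S \<subseteq> carrier G" using S subgroup.subset unfolding sylow_subgroup_def by blast
    have yc: "y \<in> carrier G" using y Sc by blast
    have pqa: "(g [^] q, g [^] p) \<in> cpR G" "ord (g [^] q) = p" "ord (g [^] p) = q"
      using pq_adj[OF g p(1) q(1) pnq] by auto
    have gqc: "g [^] q \<in> carrier G" "g [^] p \<in> carrier G" using g by auto
    obtain h where hc: "h \<in> carrier G" and gqS: "g [^] q \<in> (\<lambda>s. inv h \<otimes> s \<otimes> h) ` S"
      using sylow_conj_contains[OF fin S gqc(1), of 1] pqa(2) by auto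
    define S' where "S' = (\<lambda>s. inv h \<otimes> s \<otimes> h) ` S"
    have S': "sylow_subgroup G p S'" using conj_sylow[OF S hc] S'_def by simp
    define y' where "y' = inv h \<otimes> y \<otimes> h"
    have y'S: "y' \<in> S'" using y(1) S'_def y'_def by blast
    have y'1: "y' \<noteq> \<one>"
    proof
      assume "y' = \<one>"
      hence "inv h \<otimes> y \<otimes> inv (inv h) = inv h \<otimes> \<one> \<otimes> inv (inv h)" using y'_def hc by simp
      thus False using conj_inj[of "inv h" y "\<one>"] hc yc y(2) by simp
    qed
    have gq1: "g [^] q \<noteq> \<one>" using pqa(1) unfolding cpR_def by auto
    have "(y', g [^] q) \<in> (cpR G)\<^sup>*" using sylow_cp[OF fin S' syl[OF S'] y'S y'1 _ gq1] gqS S'_def by blast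
    hence "(y', g [^] p) \<in> (cpR G)\<^sup>*" using pqa(1) by (meson rtrancl_into_rtrancl)
    hence "(h \<otimes> y' \<otimes> inv h, h \<otimes> g [^] p \<otimes> inv h) \<in> (cpR G)\<^sup>*" using conj_cpR_rtrancl[OF hc] by blast
    moreover have "h \<otimes> y' \<otimes> inv h = y" using y'_def hc yc by (simp add: m_assoc)
    ultimately have Kb: "K (h \<otimes> g [^] p \<otimes> inv h)" using y(3) unfolding K_def by (metis rtrancl_trans)
    define b where "b = h \<otimes> g [^] p \<otimes> inv h"
    have bc: "b \<in> carrier G" using b_def hc gqc by simp
    have ob: "ord b = q ^ 1" using conj_ord[OF hc gqc(2)] pqa(3) b_def by simp
    have b1: "b \<noteq> \<one>"
    proof
      assume "b = \<one>"
      hence "ord b = 1" by simp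
      thus False using ob q(1) prime_gt_1_nat[of q] by simp
    qed
    have Kb': "K b" using Kb b_def by simp
    obtain T where T: "sylow_subgroup G q T" using sylow_exists[OF fin q] by blast
    obtain h2 where h2: "h2 \<in> carrier G" "b \<in> (\<lambda>s. inv h2 \<otimes> s \<otimes> h2) ` T"
      using sylow_conj_contains[OF fin T bc ob] by blast
    have "sylow_subgroup G q ((\<lambda>s. inv h2 \<otimes> s \<otimes> h2) ` T)" using conj_sylow[OF T h2(1)] .
    moreover have "\<exists>y\<in>(\<lambda>s. inv h2 \<otimes> s \<otimes> h2) ` T. y \<noteq> \<one> \<and> K y" using h2(2) b1 Kb' by blast
    ultimately show ?thesis unfolding Kp_def by blast
  qed
  have p0v: "p0 \<in> GK_vertices G" unfolding GK_vertices_def using p0 by simp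
  have F3: "Kp q" if qv: "q \<in> GK_vertices G" for q
  proof -
    have "(p0, q) \<in> {(x, y). x \<in> GK_vertices G \<and> y \<in> GK_vertices G \<and> GK_adj G x y}\<^sup>*"
      using gk p0v qv unfolding graph_connected_def by blast
    thus ?thesis
    proof (induction rule: rtrancl_induct)
      case base thus ?case using Kp0 .
    next
      case (step y z)
      thus ?case using F2 by blast
    qed
  qed
  have NG: "N = carrier G"
  proof -
    have Nc: "N \<subseteq> carrier G" unfolding N_def by blast
    have finN: "finite N" using Nc fin finite_subset by blast
    have "\<one> \<in> N" using subgroup.one_closed[OF Nsub] .
    hence cN0: "card N \<noteq> 0" using finN by auto
    have "order G dvd card N"
    proof (rule multiplicity_le_imp_dvd[OF oG0])
      fix q :: nat assume q: "Factorial_Ring.prime q"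
      show "multiplicity q (order G) \<le> multiplicity q (card N)"
      proof (cases "q dvd order G")
        case False thus ?thesis using not_dvd_imp_multiplicity_0[OF False] by simp
      next
        case True
        hence "q \<in> GK_vertices G" unfolding GK_vertices_def using q by simp
        then obtain S y where S: "sylow_subgroup G q S" and y: "y \<in> S" "y \<noteq> \<one>" "K y"
          using F3 unfolding Kp_def by blast
        have SN: "S \<subseteq> N" using F1[OF S y] .
        have "card S dvd card N" using card_subgroup_dvd[OF _ Nsub SN] S unfolding sylow_subgroup_def by blast
        hence "q ^ multiplicity q (order G) dvd card N" using S unfolding sylow_subgroup_def by simp
        thus ?thesis using multiplicity_geI[of "card N" q] cN0 q not_prime_unit by blast
      qed
    qed
    hence "order G \<le> card N" using cN0 by (simp add: dvd_imp_le)
    moreover have "card N \<le> order G" unfolding order_def using Nc fin card_mono by blast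
    ultimately have "card N = card (carrier G)" unfolding order_def by simp
    thus ?thesis using card_subset_eq[OF fin Nc] by simp
  qed
  have F5: "K (h \<otimes> v \<otimes> inv h)" if "K v" "h \<in> carrier G" for h v
  proof -
    have "h \<in> N" using NG that(2) by simp
    hence "(a0, h \<otimes> a0 \<otimes> inv h) \<in> (cpR G)\<^sup>*" unfolding N_def by simp
    moreover have "(h \<otimes> a0 \<otimes> inv h, h \<otimes> v \<otimes> inv h) \<in> (cpR G)\<^sup>*"
      using conj_cpR_rtrancl[OF that(2)] that(1) unfolding K_def by blast
    ultimately show ?thesis unfolding K_def by (metis rtrancl_trans)
  qed
  have F6: "K x" if x: "x \<in> carrier G" "x \<noteq> \<one>" and pp: "prime_power_ord G x" for x
  proof -
    obtain q k where qk: "Factorial_Ring.prime q" "ord x = q ^ k" using pp unfolding prime_power_ord_def by blast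
    have k0: "k \<noteq> 0" using qk x ord_eq_1 by (metis power_0)
    have "ord x dvd order G" using ord_dvd_subgroup[OF subgroup_self x(1)] unfolding order_def .
    moreover have "q dvd ord x" using qk(2) k0 by simp
    ultimately have "q dvd order G" by (rule dvd_trans[rotated])
    hence "q \<in> GK_vertices G" unfolding GK_vertices_def using qk by simp
    then obtain S y where S: "sylow_subgroup G q S" and y: "y \<in> S" "y \<noteq> \<one>" "K y"
      using F3 unfolding Kp_def by blast
    have Sc: "S \<subseteq> carrier G" using S subgroup.subset unfolding sylow_subgroup_def by blast
    have yc: "y \<in> carrier G" using y Sc by blast
    obtain h where hc: "h \<in> carrier G" and xS: "x \<in> (\<lambda>s. inv h \<otimes> s \<otimes> h) ` S"
      using sylow_conj_contains[OF fin S x(1) qk(2)] by blast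
    define S' where "S' = (\<lambda>s. inv h \<otimes> s \<otimes> h) ` S"
    have S': "sylow_subgroup G q S'" using conj_sylow[OF S hc] S'_def by simp
    define y' where "y' = inv h \<otimes> y \<otimes> h"
    have y'S: "y' \<in> S'" using y(1) S'_def y'_def by blast
    have y'1: "y' \<noteq> \<one>"
    proof
      assume "y' = \<one>"
      hence "inv h \<otimes> y \<otimes> inv (inv h) = inv h \<otimes> \<one> \<otimes> inv (inv h)" using y'_def hc by simp
      thus False using conj_inj[of "inv h" y "\<one>"] hc yc y(2) by simp
    qed
    have Ky': "K y'" using F5[OF y(3), of "inv h"] hc y'_def by simp
    have "(y', x) \<in> (cpR G)\<^sup>*" using sylow_cp[OF fin S' syl[OF S'] y'S y'1 _ x(2)] xS S'_def by blast
    thus ?thesis using Ky' unfolding K_def by (metis rtrancl_trans)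
  qed
  have F7: "K x" if x: "x \<in> carrier G - {\<one>}" for x
  proof (cases "prime_power_ord G x")
    case True thus ?thesis using F6 x by blast
  next
    case False
    obtain w where w: "w \<in> carrier G - {\<one>}" "ComPow_adj G x w" using noiso[OF x] by blast
    have "(x, w) \<in> cpR G" unfolding cpR_def using x w by auto
    then obtain u where u: "(x, u) \<in> cpR G" "prime_power_ord G u" using mixed_adj[OF fin False] by blast
    have uc: "u \<in> carrier G" "u \<noteq> \<one>" using u(1) unfolding cpR_def by auto
    have "K u" using F6[OF uc u(2)] .
    thus ?thesis using cpR_sym[OF u(1)] unfolding K_def by (meson rtrancl_into_rtrancl)
  qed
  show ?thesis
  proof (intro ballI)
    fix u v assume u: "u \<in> carrier G - {\<one>}" and v: "v \<in> carrier G - {\<one>}"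
    have "(a0, u) \<in> (cpR G)\<^sup>*" "(a0, v) \<in> (cpR G)\<^sup>*" using F7[OF u] F7[OF v] unfolding K_def by auto
    thus "(u, v) \<in> (cpR G)\<^sup>*" using cpR_rtrancl_sym by (metis rtrancl_trans)
  qed
qed

theorem mainTheorem20:
  fixes G :: "('a, 'b) monoid_scheme"
  assumes "group G"
    and "finite (carrier G)"
    and "graph_connected (GK_vertices G) (GK_adj G)"
    and "\<And>p P. sylow_subgroup G p P \<Longrightarrow>
           \<not> cyclic_group (G\<lparr>carrier := group_centre G P\<rparr>)"
  shows "has_isolated_vertex (carrier G - {\<one>\<^bsub>G\<^esub>}) (ComPow_adj G)
         \<or> graph_connected (carrier G - {\<one>\<^bsub>G\<^esub>}) (ComPow_adj G)"
proof (cases "has_isolated_vertex (carrier G - {\<one>\<^bsub>G\<^esub>}) (ComPow_adj G)")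
  case True thus ?thesis by simp
next
  case False
  interpret group G by (rule assms(1))
  have noiso: "\<And>v. v \<in> carrier G - {\<one>\<^bsub>G\<^esub>} \<Longrightarrow> \<exists>w\<in>carrier G - {\<one>\<^bsub>G\<^esub>}. w \<noteq> v \<and> ComPow_adj G v w"
    using False unfolding has_isolated_vertex_def by blast
  have "\<forall>u\<in>carrier G - {\<one>\<^bsub>G\<^esub>}. \<forall>v\<in>carrier G - {\<one>\<^bsub>G\<^esub>}. (u, v) \<in> (cpR G)\<^sup>*"
  proof (rule main_conn[OF assms(2) assms(3)])
    show "\<not> cyclic_group (G\<lparr>carrier := group_centre G P\<rparr>)" if "sylow_subgroup G p P" for p P
      using assms(4) that by blast
    show "\<exists>w\<in>carrier G - {\<one>\<^bsub>G\<^esub>}. w \<noteq> v \<and> ComPow_adj G v w" if "v \<in> carrier G - {\<one>\<^bsub>G\<^esub>}" for v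
      using noiso that by blast
  qed
  hence "graph_connected (carrier G - {\<one>\<^bsub>G\<^esub>}) (ComPow_adj G)"
    unfolding graph_connected_def cpR_def by simp
  thus ?thesis by simp
qed

end
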